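(* Let $W:\mathcal X\to\mathcal Y$ be a DMC with $|\mathcal Y|>2|\mathcal X|$, let $L\ge 2|\mathcal X|$ be an integer, and fix any input distribution. Then $$\Delta I^\ast_{\mathrm{deg}}=\min_{Q\preccurlyeq W,\ |Q|\le L}\big(I(W)-I(Q)\big)\le \nu(|\mathcal X|)\, L^{-\frac{2}{|\mathcal X|-1}},$$ so in particular $\Delta I^\ast_{\mathrm{deg}}=O\big(L^{-2/(|\mathcal X|-1)}\big)$. Moreover, the channel $Q$ produced by the greedy-merge algorithm satisfies $I(W)-I(Q)\le \nu(|\mathcal X|)\,L^{-\frac{2}{|\mathcal X|-1}}$.
   Context: $\mathcal X,\mathcal Y$ are finite disjoint sets with $|\mathcal X|\ge 2$; $W:\mathcal X\to\mathcal Y$ is a discrete memoryless channel (DMC) with transition probabilities $W(y|x)$. An input distribution $\pi(x)>0$ on $\mathcal X$ is fixed, and the output probabilities $\pi(y)=\sum_x\pi(x)W(y|x)$ are assumed positive. $I(W)$ is the mutual information between the input and output of $W$ under this input distribution (natural logarithm); for any other channel with input alphabet $\mathcal X$ the same input distribution is used. A channel $Q:\mathcal X\to\mathcal Z$ is degraded with respect to $W$, written $Q\preccurlyeq W$, if there is a channel $\Phi:\mathcal Y\to\mathcal Z$ with $Q(z|x)=\sum_{y}W(y|x)\Phi(z|y)$ for all $x,z$. $|Q|$ denotes the output alphabet size of $Q$. Merging two distinct output letters $\alpha,\beta$ of a channel $W$ produces the channel $Q$ with output alphabet $(\mathcal Y\setminus\{\alpha,\beta\})\cup\{\gamma\}$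 ($\gamma$ a new symbol), $Q(\gamma|x)=W(\alpha|x)+W(\beta|x)$ and $Q(y|x)=W(y|x)$ for all other $y$. Greedy-merge: starting from $W$, repeatedly merge the pair of output letters whose merger gives the smallest decrease in mutual information, until the output alphabet has $L$ letters. The constant is $$\nu(n)=\frac{\pi n(n-1)}{2\left(\sqrt{1+\frac{1}{2(n-1)}}-1\right)^2}\left(\frac{2n}{\Gamma\!\left(1+\frac{n-1}{2}\right)}\right)^{\frac{2}{n-1}},$$ where $\pi$ here is the number $3.14159\ldots$ and $\Gamma$ is the Gamma function. *)

theory Defs
  imports "HOL-Analysis.Analysis"
begin

definition is_channel :: "'a set \<Rightarrow> 'b set \<Rightarrow> ('a \<Rightarrow> 'b \<Rightarrow> real) \<Rightarrow> bool" where
  "is_channel X Z V \<longleftrightarrow> (\<forall>x\<in>X. (\<forall>z\<in>Z. V x z \<ge> 0) \<and> (\<Sum>z\<in>Z. V x z) = 1)"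

definition out_prob :: "('x \<Rightarrow> real) \<Rightarrow> 'x set \<Rightarrow> ('x \<Rightarrow> 'z \<Rightarrow> real) \<Rightarrow> 'z \<Rightarrow> real" where
  "out_prob p X V z = (\<Sum>x\<in>X. p x * V x z)"

definition mutual_info :: "('x \<Rightarrow> real) \<Rightarrow> 'x set \<Rightarrow> 'z set \<Rightarrow> ('x \<Rightarrow> 'z \<Rightarrow> real) \<Rightarrow> real" where
  "mutual_info p X Z V =
     (\<Sum>x\<in>X. \<Sum>z\<in>Z. if p x * V x z = 0 then 0
                       else p x * V x z * ln (V x z / out_prob p X V z))"

definition degraded :: "'x set \<Rightarrow> 'y set \<Rightarrow> 'z set \<Rightarrow> ('x \<Rightarrow> 'z \<Rightarrow> real) \<Rightarrow> ('x \<Rightarrow> 'y \<Rightarrow> real) \<Rightarrow> bool" where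
  "degraded X Y Z Q W \<longleftrightarrow>
     (\<exists>\<Phi>. is_channel Y Z \<Phi> \<and> (\<forall>x\<in>X. \<forall>z\<in>Z. Q x z = (\<Sum>y\<in>Y. W x y * \<Phi> y z)))"

definition nu :: "nat \<Rightarrow> real" where
  "nu n = (pi * real n * (real n - 1)) / (2 * (sqrt (1 + 1 / (2 * (real n - 1))) - 1)^2)
          * (2 * real n / Gamma (1 + (real n - 1) / 2)) powr (2 / (real n - 1))"

text \<open>Merged channels: an output alphabet obtained by merging letters of Y is a
  partition P of Y; the merged letter S \<in> P has Q(S|x) = sum over y in S of W(y|x).\<close>
definition merged_channel :: "('x \<Rightarrow> 'y \<Rightarrow> real) \<Rightarrow> 'x \<Rightarrow> 'y set \<Rightarrow> real" where
  "merged_channel W x S = (\<Sum>y\<in>S. W x y)"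

definition merge_blocks :: "'y set set \<Rightarrow> 'y set \<Rightarrow> 'y set \<Rightarrow> 'y set set" where
  "merge_blocks P A B = insert (A \<union> B) (P - {A, B})"

definition greedy_step :: "('x \<Rightarrow> real) \<Rightarrow> 'x set \<Rightarrow> ('x \<Rightarrow> 'y \<Rightarrow> real) \<Rightarrow> 'y set set \<Rightarrow> 'y set set \<Rightarrow> bool" where
  "greedy_step p X W P P' \<longleftrightarrow>
     (\<exists>A\<in>P. \<exists>B\<in>P. A \<noteq> B \<and> P' = merge_blocks P A B \<and>
        (\<forall>A'\<in>P. \<forall>B'\<in>P. A' \<noteq> B' \<longrightarrow>
           mutual_info p X P (merged_channel W) - mutual_info p X P' (merged_channel W)
           \<le> mutual_info p X P (merged_channel W)
              - mutual_info p X (merge_blocks P A' B') (merged_channel W)))"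

inductive greedy_reach :: "('x \<Rightarrow> real) \<Rightarrow> 'x set \<Rightarrow> 'y set \<Rightarrow> ('x \<Rightarrow> 'y \<Rightarrow> real) \<Rightarrow> nat \<Rightarrow> 'y set set \<Rightarrow> bool"
  for p X Y W L where
  init: "greedy_reach p X Y W L ((\<lambda>y. {y}) ` Y)"
| step: "greedy_reach p X Y W L P \<Longrightarrow> card P > L \<Longrightarrow> greedy_step p X W P P'
         \<Longrightarrow> greedy_reach p X Y W L P'"

definition greedy_merge_output :: "('x \<Rightarrow> real) \<Rightarrow> 'x set \<Rightarrow> 'y set \<Rightarrow> ('x \<Rightarrow> 'y \<Rightarrow> real) \<Rightarrow> nat \<Rightarrow> 'y set set \<Rightarrow> bool" where
  "greedy_merge_output p X Y W L P \<longleftrightarrow> greedy_reach p X Y W L P \<and> card P \<le> L"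

end

theory Submission
  imports Defs "HOL-Library.FuncSet"
begin


lemma T_eq:
  fixes sa sb u w :: real
  assumes "sa > 0" "sb > 0" "sa * u\<^sup>2 + sb * w\<^sup>2 > 0"
  shows "(sa+sb) * ((sa * u\<^sup>2)\<^sup>2/sa + (sb * w\<^sup>2)\<^sup>2/sb)/(sa * u\<^sup>2+sb * w\<^sup>2) - (sa * u\<^sup>2+sb * w\<^sup>2)
         = sa * sb * (u\<^sup>2-w\<^sup>2)\<^sup>2/(sa * u\<^sup>2+sb * w\<^sup>2)"
  using assms by (simp add: field_simps power2_eq_square) 

lemma T_bound0:
  fixes sa sb u w :: real
  assumes "sa > 0" "sb > 0" "u \<ge> 0" "w \<ge> 0" "sa * u\<^sup>2 + sb * w\<^sup>2 > 0"
  shows "sa * sb * (u\<^sup>2-w\<^sup>2)\<^sup>2/(sa * u\<^sup>2+sb * w\<^sup>2) \<le> 2 * max sa sb * (u - w)\<^sup>2"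
proof -
  let ?D = "sa * u\<^sup>2+sb * w\<^sup>2"
  have e: "(u\<^sup>2-w\<^sup>2)\<^sup>2 = (u-w)\<^sup>2 * (u+w)\<^sup>2" by (simp add: power2_eq_square algebra_simps)
  have h1: "(u+w)\<^sup>2 \<le> 2 * (u\<^sup>2+w\<^sup>2)"
  proof -
    have "0 \<le> (u-w)\<^sup>2" by simp
    then show ?thesis by (simp add: power2_sum power2_diff)
  qed
  have h2: "sa * sb * (u\<^sup>2+w\<^sup>2) \<le> max sa sb * ?D"
  proof -
    have "sb * (sa * u\<^sup>2) \<le> max sa sb * (sa * u\<^sup>2)"
      by (rule mult_right_mono) (use assms in auto)
    moreover have "sa * (sb * w\<^sup>2) \<le> max sa sb * (sb * w\<^sup>2)"
      by (rule mult_right_mono) (use assms in auto)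
    ultimately show ?thesis by (simp add: algebra_simps)
  qed
  have "sa * sb * (u\<^sup>2-w\<^sup>2)\<^sup>2 = (u-w)\<^sup>2 * (sa * sb * (u+w)\<^sup>2)" using e by simp
  also have "\<dots> \<le> (u-w)\<^sup>2 * (2 * (sa * sb * (u\<^sup>2+w\<^sup>2)))"
    using h1 assms by (intro mult_left_mono) (auto simp: mult_left_mono)
  also have "\<dots> \<le> (u-w)\<^sup>2 * (2 * (max sa sb * ?D))"
    using h2 by (intro mult_left_mono) auto
  finally have "sa * sb * (u\<^sup>2-w\<^sup>2)\<^sup>2 \<le> (2 * max sa sb * (u - w)\<^sup>2) * ?D" by (simp add: algebra_simps)
  then show ?thesis using assms(5) by (simp add: divide_le_eq)
qed

lemma T_bound:
  fixes a b sa sb :: real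
  assumes "a \<ge> 0" "b \<ge> 0" "sa > 0" "sb > 0"
  shows "(sa+sb) * (a\<^sup>2/sa + b\<^sup>2/sb)/(a+b) - (a+b) \<le> 2 * max sa sb * (sqrt (a/sa) - sqrt (b/sb))\<^sup>2"
proof (cases "a + b = 0")
  case True
  then have "a = 0" "b = 0" using assms by auto
  then show ?thesis by simp
next
  case False
  define u where "u = sqrt (a/sa)"
  define w where "w = sqrt (b/sb)"
  have a: "a = sa * u\<^sup>2" unfolding u_def using assms by simp
  have b: "b = sb * w\<^sup>2" unfolding w_def using assms by simp
  have "a + b > 0" using False assms(1,2) by linarith
  then have pos: "sa * u\<^sup>2 + sb * w\<^sup>2 > 0" using a b by simp
  have "(sa+sb) * (a\<^sup>2/sa + b\<^sup>2/sb)/(a+b) - (a+b) = sa * sb * (u\<^sup>2-w\<^sup>2)\<^sup>2/(sa * u\<^sup>2+sb * w\<^sup>2)"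
    unfolding a b using T_eq[OF assms(3,4) pos] by simp
  also have "\<dots> \<le> 2 * max sa sb * (u - w)\<^sup>2"
    by (rule T_bound0) (use assms pos in \<open>auto simp: u_def w_def\<close>)
  finally show ?thesis by (simp add: u_def w_def)
qed

lemma term_bound:
  fixes a b sa sb px :: real
  assumes "a \<ge> 0" "b \<ge> 0" "sa > 0" "sb > 0" "px > 0"
  shows "(if a = 0 then 0 else a * ln (a / (px * sa))) + (if b = 0 then 0 else b * ln (b / (px * sb)))
         - (if a + b = 0 then 0 else (a+b) * ln ((a+b) / (px * (sa+sb))))
         \<le> (sa+sb) * (a\<^sup>2/sa + b\<^sup>2/sb)/(a+b) - (a+b)"
proof (cases "a + b = 0")
  case True
  then have "a = 0" "b = 0" using assms by auto
  then show ?thesis by simp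
next
  case False
  let ?S = "sa + sb"
  have ab: "a + b > 0" using False assms by auto
  have A: "(if a = 0 then 0 else a * ln (a / (px * sa))) - a * ln ((a+b) / (px * ?S))
        \<le> a * (a * ?S / (sa * (a+b)) - 1)"
  proof (cases "a = 0")
    case True then show ?thesis by simp
  next
    case False
    then have a0: "a > 0" using assms by auto
    have "ln (a / (px * sa)) - ln ((a+b) / (px * ?S)) = ln (a * ?S / (sa * (a+b)))"
      using a0 ab assms by (simp add: ln_div ln_mult)
    also have "\<dots> \<le> a * ?S / (sa * (a+b)) - 1"
      using a0 ab assms by (intro ln_le_minus_one) simp
    finally show ?thesis using False a0
      by (simp add: right_diff_distrib[symmetric] mult_left_mono)
  qed
  have B: "(if b = 0 then 0 else b * ln (b / (px * sb))) - b * ln ((a+b) / (px * ?S))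
        \<le> b * (b * ?S / (sb * (a+b)) - 1)"
  proof (cases "b = 0")
    case True then show ?thesis by simp
  next
    case False
    then have b0: "b > 0" using assms by auto
    have "ln (b / (px * sb)) - ln ((a+b) / (px * ?S)) = ln (b * ?S / (sb * (a+b)))"
      using b0 ab assms by (simp add: ln_div ln_mult)
    also have "\<dots> \<le> b * ?S / (sb * (a+b)) - 1"
      using b0 ab assms by (intro ln_le_minus_one) simp
    finally show ?thesis using False b0
      by (simp add: right_diff_distrib[symmetric] mult_left_mono)
  qed
  have eq: "a * (a * ?S / (sa * (a+b)) - 1) + b * (b * ?S / (sb * (a+b)) - 1)
         = ?S * (a\<^sup>2/sa + b\<^sup>2/sb)/(a+b) - (a+b)"
  proof -
    have n: "a + b \<noteq> 0" "sa \<noteq> 0" "sb \<noteq> 0" using ab assms by auto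
    define c where "c = a + b"
    have c: "c \<noteq> 0" using n c_def by simp
    have "a * (a * ?S / (sa * c) - 1) + b * (b * ?S / (sb * c) - 1)
         = ?S * (a\<^sup>2/sa + b\<^sup>2/sb)/c - c"
      using c n unfolding c_def[symmetric] by (simp add: field_simps power2_eq_square) (simp add: c_def algebra_simps)
    then show ?thesis by (simp add: c_def)
  qed
  show ?thesis using A B eq False by (simp add: algebra_simps)
qed



definition Gf :: "('x \<Rightarrow> real) \<Rightarrow> 'x set \<Rightarrow> ('x \<Rightarrow> real) \<Rightarrow> real" where
  "Gf p X j = (\<Sum>x\<in>X. if j x = 0 then 0 else j x * ln (j x / (p x * (\<Sum>x'\<in>X. j x'))))"

lemma mi_G:
  assumes "\<forall>x\<in>X. p x > 0"
  shows "mutual_info p X Z V = (\<Sum>z\<in>Z. Gf p X (\<lambda>x. p x * V x z))"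
  unfolding mutual_info_def Gf_def out_prob_def
  apply (subst sum.swap)
  apply (rule sum.cong, simp)
  apply (rule sum.cong, simp)
  using assms by auto

lemma merge_cost_bound:
  fixes a b :: "'x \<Rightarrow> real"
  assumes "finite X" "\<forall>x\<in>X. p x > 0" "\<forall>x\<in>X. a x \<ge> 0" "\<forall>x\<in>X. b x \<ge> 0"
    "sum a X > 0" "sum b X > 0"
  shows "Gf p X a + Gf p X b - Gf p X (\<lambda>x. a x + b x)
    \<le> 2 * max (sum a X) (sum b X) * (\<Sum>x\<in>X. (sqrt (a x / sum a X) - sqrt (b x / sum b X))\<^sup>2)"
proof -
  let ?sa = "sum a X" and ?sb = "sum b X"
  have s: "(\<Sum>x\<in>X. a x + b x) = ?sa + ?sb" by (simp add: sum.distrib)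
  have "Gf p X a + Gf p X b - Gf p X (\<lambda>x. a x + b x) =
    (\<Sum>x\<in>X. (if a x = 0 then 0 else a x * ln (a x / (p x * ?sa))) + (if b x = 0 then 0 else b x * ln (b x / (p x * ?sb)))
         - (if a x + b x = 0 then 0 else (a x + b x) * ln ((a x + b x) / (p x * (?sa + ?sb)))))"
    unfolding Gf_def s by (simp add: sum.distrib sum_subtractf)
  also have "\<dots> \<le> (\<Sum>x\<in>X. 2 * max ?sa ?sb * (sqrt (a x / ?sa) - sqrt (b x / ?sb))\<^sup>2)"
  proof (rule sum_mono)
    fix x assume x: "x \<in> X"
    show "(if a x = 0 then 0 else a x * ln (a x / (p x * ?sa))) + (if b x = 0 then 0 else b x * ln (b x / (p x * ?sb)))
         - (if a x + b x = 0 then 0 else (a x + b x) * ln ((a x + b x) / (p x * (?sa + ?sb))))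
         \<le> 2 * max ?sa ?sb * (sqrt (a x / ?sa) - sqrt (b x / ?sb))\<^sup>2"
      by (rule order_trans[OF term_bound[of "a x" "b x" ?sa ?sb "p x"] T_bound[of "a x" "b x" ?sa ?sb]])
         (use assms x in auto)
  qed
  finally show ?thesis by (simp add: sum_distrib_left)
qed

definition part :: "'y set \<Rightarrow> 'y set set \<Rightarrow> bool" where
  "part Y P \<longleftrightarrow> finite P \<and> (\<forall>S\<in>P. S \<noteq> {} \<and> S \<subseteq> Y) \<and> \<Union>P = Y \<and> (\<forall>A\<in>P. \<forall>B\<in>P. A \<noteq> B \<longrightarrow> A \<inter> B = {})"

lemma part_init: "finite Y \<Longrightarrow> part Y ((\<lambda>y. {y}) ` Y)"
  unfolding part_def by auto

lemma merge_notin: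
  assumes "part Y P" "A \<in> P" "B \<in> P" "A \<noteq> B"
  shows "A \<union> B \<notin> P - {A, B}"
proof
  assume "A \<union> B \<in> P - {A, B}"
  then have C: "A \<union> B \<in> P" "A \<union> B \<noteq> A" by auto
  have dj: "\<forall>A\<in>P. \<forall>B\<in>P. A \<noteq> B \<longrightarrow> A \<inter> B = {}" and ne: "A \<noteq> {}"
    using assms unfolding part_def by auto
  have "(A \<union> B) \<inter> A = {}" using dj C assms(2) by metis
  then show False using ne by auto
qed

lemma part_merge:
  assumes "part Y P" "A \<in> P" "B \<in> P" "A \<noteq> B"
  shows "part Y (merge_blocks P A B)" "card (merge_blocks P A B) = card P - 1"
proof -
  have f: "finite P" and ne: "\<forall>S\<in>P. S \<noteq> {} \<and> S \<subseteq> Y" and un: "\<Union>P = Y"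
    and dj: "\<forall>A\<in>P. \<forall>B\<in>P. A \<noteq> B \<longrightarrow> A \<inter> B = {}"
    using assms(1) unfolding part_def by auto
  have dj2: "C \<inter> D = {}" if "C \<in> merge_blocks P A B" "D \<in> merge_blocks P A B" "C \<noteq> D" for C D
  proof -
    note h = that
    consider "C = A \<union> B" "D \<in> P - {A,B}" | "D = A \<union> B" "C \<in> P - {A,B}" | "C \<in> P - {A,B}" "D \<in> P - {A,B}"
      using h unfolding merge_blocks_def by auto
    then show ?thesis
    proof cases
      case 1
      then have "A \<inter> D = {}" "B \<inter> D = {}" using dj assms by auto
      then show ?thesis using 1 by auto
    next
      case 2
      then have "A \<inter> C = {}" "B \<inter> C = {}" using dj assms by auto
      then show ?thesis using 2 by auto
    next
      case 3
      then show ?thesis using dj h(3) by auto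
    qed
  qed
  show "part Y (merge_blocks P A B)"
    unfolding part_def
  proof (intro conjI)
    show "finite (merge_blocks P A B)" using f unfolding merge_blocks_def by simp
    show "\<forall>S\<in>merge_blocks P A B. S \<noteq> {} \<and> S \<subseteq> Y" using ne assms unfolding merge_blocks_def by auto
    show "\<Union> (merge_blocks P A B) = Y" using un assms unfolding merge_blocks_def by auto
    show "\<forall>C\<in>merge_blocks P A B. \<forall>D\<in>merge_blocks P A B. C \<noteq> D \<longrightarrow> C \<inter> D = {}"
      using dj2 by blast
  qed
  have sub: "{A, B} \<subseteq> P" using assms by auto
  have c2: "card {A, B} = 2" using assms by simp
  have "card {A,B} \<le> card P" using card_mono[OF f sub] .
  then have ge: "card P \<ge> 2" using c2 by simp
  have "card (P - {A, B}) = card P - 2"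
    using card_Diff_subset[OF _ sub] c2 by simp
  moreover have "card (merge_blocks P A B) = Suc (card (P - {A, B}))"
    unfolding merge_blocks_def using merge_notin[OF assms] f by (simp add: card_insert_disjoint)
  ultimately show "card (merge_blocks P A B) = card P - 1" using ge by simp
qed



definition jv :: "('x \<Rightarrow> real) \<Rightarrow> ('x \<Rightarrow> 'y \<Rightarrow> real) \<Rightarrow> 'y set \<Rightarrow> 'x \<Rightarrow> real" where
  "jv p W S = (\<lambda>x. p x * merged_channel W x S)"

lemma I_part:
  assumes "\<forall>x\<in>X. p x > 0"
  shows "mutual_info p X P (merged_channel W) = (\<Sum>S\<in>P. Gf p X (jv p W S))"
  unfolding jv_def by (rule mi_G[OF assms])

lemma jv_union:
  assumes "finite A" "finite B" "A \<inter> B = {}"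
  shows "jv p W (A \<union> B) = (\<lambda>x. jv p W A x + jv p W B x)"
  unfolding jv_def merged_channel_def using assms
  by (simp add: sum.union_disjoint distrib_left)

lemma merge_diff:
  assumes "part Y P" "finite Y" "A \<in> P" "B \<in> P" "A \<noteq> B" "\<forall>x\<in>X. p x > 0"
  shows "mutual_info p X P (merged_channel W) - mutual_info p X (merge_blocks P A B) (merged_channel W)
    = Gf p X (jv p W A) + Gf p X (jv p W B) - Gf p X (\<lambda>x. jv p W A x + jv p W B x)"
proof -
  have f: "finite P" and ne: "\<forall>S\<in>P. S \<noteq> {} \<and> S \<subseteq> Y"
    and dj: "\<forall>A\<in>P. \<forall>B\<in>P. A \<noteq> B \<longrightarrow> A \<inter> B = {}"
    using assms(1) unfolding part_def by auto
  have fA: "finite A" "finite B" using ne assms(2,3,4) by (auto intro: finite_subset)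
  have d: "A \<inter> B = {}" using dj assms(3,4,5) by auto
  let ?g = "\<lambda>S. Gf p X (jv p W S)"
  have "sum ?g P = sum ?g (P - {A,B}) + sum ?g {A,B}"
    by (rule sum.subset_diff) (use assms f in auto)
  moreover have "sum ?g (merge_blocks P A B) = ?g (A \<union> B) + sum ?g (P - {A,B})"
    unfolding merge_blocks_def using merge_notin[OF assms(1,3,4,5)] f by simp
  ultimately show ?thesis using assms(5) unfolding I_part[OF assms(6)] jv_union[OF fA d] by simp
qed

lemma wt_eq:
  "sum (jv p W S) X = (\<Sum>y\<in>S. out_prob p X W y)"
  unfolding jv_def merged_channel_def out_prob_def
  by (simp add: sum_distrib_left sum.swap[of _ S])

lemma wt_pos:
  assumes "finite S" "S \<noteq> {}" "\<forall>y\<in>S. out_prob p X W y > 0"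
  shows "sum (jv p W S) X > 0"
  unfolding wt_eq using assms by (intro sum_pos) auto

lemma out_total:
  assumes "is_channel X Y W" "(\<Sum>x\<in>X. p x) = 1"
  shows "(\<Sum>y\<in>Y. out_prob p X W y) = 1"
proof -
  have "(\<Sum>y\<in>Y. out_prob p X W y) = (\<Sum>x\<in>X. p x * (\<Sum>y\<in>Y. W x y))"
    unfolding out_prob_def by (simp add: sum_distrib_left sum.swap[of _ Y])
  also have "\<dots> = (\<Sum>x\<in>X. p x)" using assms(1) unfolding is_channel_def by simp
  finally show ?thesis using assms(2) by simp
qed

lemma wt_total:
  assumes "part Y P" "is_channel X Y W" "(\<Sum>x\<in>X. p x) = 1" "finite Y"
  shows "(\<Sum>S\<in>P. sum (jv p W S) X) = 1"
proof -
  have ne: "\<forall>S\<in>P. S \<noteq> {} \<and> S \<subseteq> Y" and un: "\<Union>P = Y"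
    and dj: "\<forall>A\<in>P. \<forall>B\<in>P. A \<noteq> B \<longrightarrow> A \<inter> B = {}"
    using assms(1) unfolding part_def by auto
  have fin: "\<forall>S\<in>P. finite S" using ne assms(4) by (auto intro: finite_subset)
  have "(\<Sum>S\<in>P. sum (jv p W S) X) = (\<Sum>S\<in>P. \<Sum>y\<in>S. out_prob p X W y)"
    by (simp add: wt_eq)
  also have "\<dots> = (\<Sum>y\<in>\<Union>P. out_prob p X W y)"
    using sum.Union_disjoint[OF fin dj, of "out_prob p X W"] by (simp add: o_def)
  also have "\<dots> = 1" using un out_total[OF assms(2,3)] by simp
  finally show ?thesis .
qed

lemma jv_nonneg:
  assumes "is_channel X Y W" "\<forall>x\<in>X. p x > 0" "S \<subseteq> Y" "x \<in> X"
  shows "jv p W S x \<ge> 0"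
  unfolding jv_def merged_channel_def using assms unfolding is_channel_def
  by (intro mult_nonneg_nonneg sum_nonneg) (auto simp: less_imp_le)



lemma x0_bound:
  fixes a b :: "'x \<Rightarrow> real" and n :: real
  assumes "finite X" "x0 \<in> X" "\<forall>x\<in>X. a x \<ge> 0" "\<forall>x\<in>X. b x \<ge> 0"
    "(\<Sum>x\<in>X. (a x)\<^sup>2) = 1" "(\<Sum>x\<in>X. (b x)\<^sup>2) = 1" "n > 0"
    "(a x0)\<^sup>2 \<ge> 1/n" "(b x0)\<^sup>2 \<ge> 1/n"
  shows "(a x0 - b x0)\<^sup>2 \<le> n * (\<Sum>x\<in>X-{x0}. (a x - b x)\<^sup>2)"
proof -
  let ?R = "X - {x0}"
  let ?D = "\<Sum>x\<in>?R. (a x - b x)\<^sup>2"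
  have ra: "(\<Sum>x\<in>X. (a x)\<^sup>2) = (a x0)\<^sup>2 + (\<Sum>x\<in>?R. (a x)\<^sup>2)"
    using sum.remove[OF assms(1,2)] by simp
  have rb: "(\<Sum>x\<in>X. (b x)\<^sup>2) = (b x0)\<^sup>2 + (\<Sum>x\<in>?R. (b x)\<^sup>2)"
    using sum.remove[OF assms(1,2)] by simp
  have e1: "(a x0)\<^sup>2 - (b x0)\<^sup>2 = (\<Sum>x\<in>?R. (b x - a x) * (b x + a x))"
  proof -
    have "(\<Sum>x\<in>?R. (b x - a x) * (b x + a x)) = (\<Sum>x\<in>?R. (b x)\<^sup>2) - (\<Sum>x\<in>?R. (a x)\<^sup>2)"
      by (simp add: sum_subtractf[symmetric] power2_eq_square algebra_simps)
    then show ?thesis using ra rb assms(5,6) by simp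
  qed
  have cs: "((a x0)\<^sup>2 - (b x0)\<^sup>2)\<^sup>2 \<le> (\<Sum>x\<in>?R. (b x - a x)\<^sup>2) * (\<Sum>x\<in>?R. (b x + a x)\<^sup>2)"
    unfolding e1 by (rule Cauchy_Schwarz_ineq_sum)
  have s1: "(\<Sum>x\<in>?R. (b x - a x)\<^sup>2) = ?D" by (simp add: power2_commute)
  have s2: "(\<Sum>x\<in>?R. (b x + a x)\<^sup>2) \<le> 4"
  proof -
    have "(\<Sum>x\<in>?R. (b x + a x)\<^sup>2) \<le> (\<Sum>x\<in>?R. 2 * ((a x)\<^sup>2 + (b x)\<^sup>2))"
    proof (rule sum_mono)
      fix x
      have "0 \<le> (a x - b x)\<^sup>2" by simp
      then show "(b x + a x)\<^sup>2 \<le> 2 * ((a x)\<^sup>2 + (b x)\<^sup>2)" by (simp add: power2_sum power2_diff mult.commute mult.left_commute)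
    qed
    also have "\<dots> = 2 * ((\<Sum>x\<in>?R. (a x)\<^sup>2) + (\<Sum>x\<in>?R. (b x)\<^sup>2))"
      by (simp add: sum.distrib sum_distrib_left)
    also have "\<dots> \<le> 2 * (1 + 1)"
    proof -
      have "(\<Sum>x\<in>?R. (a x)\<^sup>2) \<le> 1" using ra assms(5) zero_le_power2[of "a x0"] by linarith
      moreover have "(\<Sum>x\<in>?R. (b x)\<^sup>2) \<le> 1" using rb assms(6) zero_le_power2[of "b x0"] by linarith
      ultimately have "(\<Sum>x\<in>?R. (a x)\<^sup>2) + (\<Sum>x\<in>?R. (b x)\<^sup>2) \<le> 1 + 1" by (rule add_mono)
      then show ?thesis by (intro mult_left_mono) auto
    qed
    finally show ?thesis by simp
  qed
  have D0: "?D \<ge> 0" by (simp add: sum_nonneg)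
  have c2: "((a x0)\<^sup>2 - (b x0)\<^sup>2)\<^sup>2 \<le> 4 * ?D"
  proof -
    have "((a x0)\<^sup>2 - (b x0)\<^sup>2)\<^sup>2 \<le> ?D * (\<Sum>x\<in>?R. (b x + a x)\<^sup>2)" using cs s1 by simp
    also have "\<dots> \<le> ?D * 4" using s2 D0 by (intro mult_left_mono) auto
    finally show ?thesis by simp
  qed
  have a0: "a x0 \<ge> 0" "b x0 \<ge> 0" using assms(2,3,4) by auto
  have ab: "a x0 * b x0 \<ge> 1/n"
  proof -
    have "(1/n)\<^sup>2 \<le> (a x0)\<^sup>2 * (b x0)\<^sup>2"
      using mult_mono[OF assms(8,9)] assms(7) by (simp add: power2_eq_square)
    then have "(1/n)\<^sup>2 \<le> (a x0 * b x0)\<^sup>2" by (simp add: power_mult_distrib)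
    then show ?thesis by (rule power2_le_imp_le) (use a0 in simp)
  qed
  have s4: "(a x0 + b x0)\<^sup>2 \<ge> 4/n"
  proof -
    have "(a x0 + b x0)\<^sup>2 = (a x0)\<^sup>2 + (b x0)\<^sup>2 + 2 * (a x0 * b x0)" by (simp add: power2_sum)
    moreover have "4/n = 1/n + 1/n + 2 * (1/n)" by simp
    ultimately show ?thesis using ab assms(8,9) by linarith
  qed
  have "(a x0 - b x0)\<^sup>2 * (4/n) \<le> (a x0 - b x0)\<^sup>2 * (a x0 + b x0)\<^sup>2"
    using s4 by (intro mult_left_mono) auto
  also have "\<dots> = ((a x0 - b x0) * (a x0 + b x0))\<^sup>2"
    by (simp add: power_mult_distrib)
  also have "(a x0 - b x0) * (a x0 + b x0) = (a x0)\<^sup>2 - (b x0)\<^sup>2"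
    by (simp add: power2_eq_square algebra_simps)
  also have "((a x0)\<^sup>2 - (b x0)\<^sup>2)\<^sup>2 \<le> 4 * ?D" by (rule c2)
  finally have F: "(a x0 - b x0)\<^sup>2 * (4/n) \<le> 4 * ?D" .
  have "(a x0 - b x0)\<^sup>2 = ((a x0 - b x0)\<^sup>2 * (4/n)) * (n/4)" using assms(7) by simp
  also have "\<dots> \<le> (4 * ?D) * (n/4)" using F assms(7) by (intro mult_right_mono) auto
  also have "\<dots> = n * ?D" by simp
  finally show ?thesis .
qed

definition idx :: "nat \<Rightarrow> real \<Rightarrow> nat" where
  "idx m v = min (m - 1) (nat \<lfloor>real m * v\<rfloor>)"

lemma idx_bounds:
  assumes "m \<ge> 1" "0 \<le> v" "v \<le> 1"
  shows "real (idx m v) \<le> real m * v" "real m * v \<le> real (idx m v) + 1" "idx m v < m"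
proof -
  have fl0: "\<lfloor>real m * v\<rfloor> \<ge> 0" using assms by simp
  show "idx m v < m" unfolding idx_def using assms by simp
  show "real (idx m v) \<le> real m * v"
  proof (cases "nat \<lfloor>real m * v\<rfloor> \<le> m - 1")
    case True
    then have "idx m v = nat \<lfloor>real m * v\<rfloor>" unfolding idx_def by simp
    then show ?thesis using fl0 by simp
  next
    case False
    then have "idx m v = m - 1" unfolding idx_def by simp
    moreover have "real m * v \<ge> real (m - 1)" using False fl0 by linarith
    ultimately show ?thesis by simp
  qed
  show "real m * v \<le> real (idx m v) + 1"
  proof (cases "nat \<lfloor>real m * v\<rfloor> \<le> m - 1")
    case True
    then have "idx m v = nat \<lfloor>real m * v\<rfloor>" unfolding idx_def by simp
    then show ?thesis using fl0 by linarith
  next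
    case False
    then have "idx m v = m - 1" unfolding idx_def by simp
    moreover have "real m * v \<le> real m" using assms by simp
    ultimately show ?thesis using assms(1) by simp
  qed
qed

lemma idx_close:
  assumes "m \<ge> 1" "0 \<le> v" "v \<le> 1" "0 \<le> w" "w \<le> 1" "idx m v = idx m w"
  shows "(v - w)\<^sup>2 \<le> 1 / (real m)\<^sup>2"
proof -
  note b1 = idx_bounds[OF assms(1,2,3)] and b2 = idx_bounds[OF assms(1,4,5)]
  have i: "real (idx m v) = real (idx m w)" using assms(6) by simp
  have "\<bar>real m * v - real m * w\<bar> \<le> 1" using b1(1,2) b2(1,2) unfolding i by linarith
  then have "\<bar>real m * (v - w)\<bar> \<le> 1" by (simp add: right_diff_distrib)
  then have "\<bar>real m * (v - w)\<bar>\<^sup>2 \<le> 1\<^sup>2"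
    by (intro power_mono) auto
  then have "(real m * (v - w))\<^sup>2 \<le> 1\<^sup>2" by simp
  then have "(real m)\<^sup>2 * (v - w)\<^sup>2 \<le> 1" by (simp add: power_mult_distrib)
  then show ?thesis using assms(1) by (simp add: field_simps)
qed



lemma argmax_ex:
  fixes f :: "'x \<Rightarrow> real"
  assumes "finite X" "X \<noteq> {}"
  shows "\<exists>x\<in>X. \<forall>y\<in>X. f y \<le> f x"
proof -
  have "Max (f ` X) \<in> f ` X" using assms by (intro Max_in) auto
  then obtain x where x: "x \<in> X" "f x = Max (f ` X)" by auto
  have "\<forall>y\<in>X. f y \<le> f x" unfolding x(2) using assms by (intro ballI Max_ge) auto
  then show ?thesis using x(1) by blast
qed

lemma pack:
  fixes u :: "'i \<Rightarrow> 'x \<Rightarrow> real" and m n :: nat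
  assumes fX: "finite X" and cX: "card X = n" and n2: "n \<ge> 2" and fI: "finite I" and m1: "m \<ge> 1"
    and nn: "\<forall>i\<in>I. \<forall>x\<in>X. u i x \<ge> 0" and sq: "\<forall>i\<in>I. (\<Sum>x\<in>X. (u i x)\<^sup>2) = 1"
    and big: "card I > n * m ^ (n - 1)"
  shows "\<exists>i\<in>I. \<exists>j\<in>I. i \<noteq> j \<and> (\<Sum>x\<in>X. (u i x - u j x)\<^sup>2) \<le> real (n+1) * real (n-1) / (real m)\<^sup>2"
proof -
  have Xne: "X \<noteq> {}" using cX n2 by auto
  define xs where "xs i = (SOME x. x \<in> X \<and> (\<forall>y\<in>X. u i y \<le> u i x))" for i
  have xs: "xs i \<in> X \<and> (\<forall>y\<in>X. u i y \<le> u i (xs i))" for i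
  proof -
    have "\<exists>x. x \<in> X \<and> (\<forall>y\<in>X. u i y \<le> u i x)" using argmax_ex[OF fX Xne, of "u i"] by blast
    then show ?thesis unfolding xs_def by (rule someI_ex)
  qed
  have npos: "real n > 0" using n2 by simp
  have big0: "(u i (xs i))\<^sup>2 \<ge> 1 / real n" if i: "i \<in> I" for i
  proof -
    have "1 = (\<Sum>y\<in>X. (u i y)\<^sup>2)" using sq i by simp
    also have "\<dots> \<le> (\<Sum>y\<in>X. (u i (xs i))\<^sup>2)"
    proof (rule sum_mono)
      fix y assume y: "y \<in> X"
      show "(u i y)\<^sup>2 \<le> (u i (xs i))\<^sup>2"
        by (rule power_mono) (use xs y nn i in auto)
    qed
    also have "\<dots> = (u i (xs i))\<^sup>2 * real n" using cX by simp
    finally show ?thesis using npos by (simp add: pos_divide_le_eq)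
  qed
  have le1: "u i x \<le> 1" if "i \<in> I" "x \<in> X" for i x
  proof -
    have "(u i x)\<^sup>2 \<le> (\<Sum>y\<in>X. (u i y)\<^sup>2)"
      by (rule member_le_sum) (use that fX in auto)
    then have "(u i x)\<^sup>2 \<le> 1\<^sup>2" using sq that by simp
    then show ?thesis by (rule power2_le_imp_le) simp
  qed
  define cell where "cell i = (xs i, restrict (\<lambda>x. idx m (u i x)) (X - {xs i}))" for i
  define T where "T = (SIGMA x0:X. PiE (X - {x0}) (\<lambda>_. {..<m}))"
  have sub: "cell ` I \<subseteq> T"
  proof
    fix c assume "c \<in> cell ` I"
    then obtain i where i: "i \<in> I" "c = cell i" by auto
    have "restrict (\<lambda>x. idx m (u i x)) (X - {xs i}) \<in> PiE (X - {xs i}) (\<lambda>_. {..<m})"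
      unfolding restrict_PiE_iff
    proof
      fix x assume "x \<in> X - {xs i}"
      then show "idx m (u i x) \<in> {..<m}" using idx_bounds(3)[OF m1] nn le1 i by auto
    qed
    then show "c \<in> T" unfolding i(2) cell_def T_def using xs by auto
  qed
  have fT: "finite T" unfolding T_def using fX by (intro finite_SigmaI finite_PiE) auto
  have cT: "card T = n * m ^ (n - 1)"
  proof -
    have "card T = (\<Sum>x0\<in>X. card (PiE (X - {x0}) (\<lambda>_. {..<m})))"
      unfolding T_def using fX by (intro card_SigmaI) (auto intro: finite_PiE)
    also have "\<dots> = (\<Sum>x0\<in>X. m ^ (n - 1))"
    proof (rule sum.cong)
      fix x0 assume "x0 \<in> X"
      then have "card (X - {x0}) = n - 1" using cX fX by simp
      then show "card (PiE (X - {x0}) (\<lambda>_. {..<m})) = m ^ (n - 1)"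
        using fX by (simp add: card_PiE)
    qed simp
    also have "\<dots> = n * m ^ (n - 1)" using cX by simp
    finally show ?thesis .
  qed
  have "card (cell ` I) \<le> card T" by (rule card_mono[OF fT sub])
  then have "card (cell ` I) < card I" using big cT by simp
  then have "\<not> inj_on cell I" using pigeonhole by blast
  then obtain i j where ij: "i \<in> I" "j \<in> I" "i \<noteq> j" "cell i = cell j"
    unfolding inj_on_def by blast
  define x0 where "x0 = xs i"
  have x0: "x0 \<in> X" "xs j = x0" using ij(4) xs unfolding x0_def cell_def by auto
  have rj: "restrict (\<lambda>x. idx m (u i x)) (X - {x0}) = restrict (\<lambda>x. idx m (u j x)) (X - {x0})"
    using ij(4) x0 unfolding cell_def x0_def by simp
  have eqi: "idx m (u i x) = idx m (u j x)" if "x \<in> X - {x0}" for x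
    using fun_cong[OF rj, of x] that by simp
  let ?D = "\<Sum>x\<in>X-{x0}. (u i x - u j x)\<^sup>2"
  have D: "?D \<le> real (n - 1) / (real m)\<^sup>2"
  proof -
    have "?D \<le> (\<Sum>x\<in>X-{x0}. 1 / (real m)\<^sup>2)"
    proof (rule sum_mono)
      fix x assume x: "x \<in> X - {x0}"
      show "(u i x - u j x)\<^sup>2 \<le> 1 / (real m)\<^sup>2"
        by (rule idx_close[OF m1]) (use x nn le1 ij eqi in auto)
    qed
    also have "\<dots> = real (n - 1) / (real m)\<^sup>2" using cX fX x0 by simp
    finally show ?thesis .
  qed
  have d0: "(u i x0 - u j x0)\<^sup>2 \<le> real n * ?D"
    by (rule x0_bound) (use fX x0 nn ij sq npos big0[OF ij(1)] big0[OF ij(2)] in \<open>auto simp: x0_def\<close>)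
  have "(\<Sum>x\<in>X. (u i x - u j x)\<^sup>2) = (u i x0 - u j x0)\<^sup>2 + ?D"
    using sum.remove[OF fX x0(1)] by simp
  also have "\<dots> \<le> real n * ?D + ?D" using d0 by simp
  also have "\<dots> = real (n+1) * ?D" by (simp add: algebra_simps)
  also have "\<dots> \<le> real (n+1) * (real (n - 1) / (real m)\<^sup>2)" using D by (intro mult_left_mono) auto
  finally show ?thesis using ij by auto
qed



lemma gamma_half_bound:
  "Gamma (1 + real k / 2) \<le> (1 + real k / 2) powr (real k / 2)"
proof (induction k rule: less_induct)
  case (less k)
  have "k = 0 \<or> k = 1 \<or> k = (k - 2) + 2" by linarith
  then consider "k = 0" | "k = 1" | j where "k = j + 2" by blast
  then show ?case
  proof cases
    case 1 then show ?thesis by simp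
  next
    case 2
    have g: "Gamma (1/2 + 1 :: real) = 1/2 * Gamma (1/2)"
      by (rule Gamma_plus1) (auto dest: nonpos_Ints_nonpos)
    have "Gamma (1 + real k / 2) = sqrt pi / 2"
      using g 2 by (simp add: Gamma_one_half_real add.commute)
    also have "\<dots> \<le> sqrt (3/2)"
    proof -
      have "sqrt pi \<le> sqrt 6" using pi_less_4 by simp
      also have "sqrt 6 = 2 * sqrt (3/2)"
      proof -
        have "sqrt 6 = sqrt (4 * (3/2))" by simp
        also have "\<dots> = 2 * sqrt (3/2)" by (simp only: real_sqrt_mult) simp
        finally show ?thesis .
      qed
      finally show ?thesis by simp
    qed
    also have "\<dots> = (1 + real k / 2) powr (real k / 2)"
      using 2 by (simp add: powr_half_sqrt)
    finally show ?thesis .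
  next
    case 3
    let ?z = "1 + real j / 2"
    have zpos: "?z > 0" by simp
    have IH: "Gamma ?z \<le> ?z powr (real j / 2)" using less[of j] 3 by simp
    have "Gamma (1 + real k / 2) = Gamma (?z + 1)" using 3 by (simp add: field_simps)
    also have "\<dots> = ?z * Gamma ?z"
      by (rule Gamma_plus1) (use zpos in \<open>auto dest: nonpos_Ints_nonpos\<close>)
    also have "\<dots> \<le> ?z * ?z powr (real j / 2)" using IH zpos by (intro mult_left_mono) auto
    also have "\<dots> = ?z powr (real j / 2 + 1)" using zpos by (simp add: powr_add)
    also have "\<dots> \<le> (1 + real k / 2) powr (real j / 2 + 1)"
      by (rule powr_mono2) (use 3 in auto)
    also have "real j / 2 + 1 = real k / 2" using 3 by simp
    finally show ?thesis .
  qed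
qed

definition dl :: "nat \<Rightarrow> real" where "dl n = 2 / (real n - 1)"
definition Kc :: "nat \<Rightarrow> real" where "Kc n = 16 * ((real n)\<^sup>2 - 1) * (2 * real n) powr dl n"

lemma sqrt_bound:
  fixes N :: real
  assumes "N \<ge> 2"
  shows "sqrt (1 + 1 / (2 * (N - 1))) - 1 > 0"
    "(sqrt (1 + 1 / (2 * (N - 1))) - 1)\<^sup>2 \<le> 1 / (16 * (N - 1)\<^sup>2)"
proof -
  define e where "e = 1 / (2 * (N - 1))"
  define s where "s = sqrt (1 + e)"
  have e0: "e > 0" unfolding e_def using assms by simp
  have s1: "s > 1" unfolding s_def using e0 by simp
  have ss: "s\<^sup>2 = 1 + e" unfolding s_def using e0 by simp
  have "s - 1 = e / (s + 1)"
  proof -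
    have "(s - 1) * (s + 1) = e" using ss by (simp add: power2_eq_square algebra_simps)
    then show ?thesis using s1 by (simp add: eq_divide_eq)
  qed
  also have "\<dots> \<le> e / 2" using s1 e0 by (intro divide_left_mono) auto
  finally have le: "s - 1 \<le> e / 2" .
  show "sqrt (1 + 1 / (2 * (N - 1))) - 1 > 0" using s1 unfolding s_def e_def by simp
  have "(s - 1)\<^sup>2 \<le> (e / 2)\<^sup>2" using le s1 by (intro power_mono) auto
  also have "(e / 2)\<^sup>2 = 1 / (16 * (N - 1)\<^sup>2)" unfolding e_def by (simp add: power2_eq_square algebra_simps)
  finally show "(sqrt (1 + 1 / (2 * (N - 1))) - 1)\<^sup>2 \<le> 1 / (16 * (N - 1)\<^sup>2)"
    unfolding s_def e_def .
qed

lemma nu_bound: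
  assumes "n \<ge> 2"
  shows "Kc n / dl n \<le> nu n"
proof -
  define N where "N = real n"
  have N2: "N \<ge> 2" using assms unfolding N_def by simp
  define G where "G = Gamma (1 + (N - 1) / 2)"
  define s where "s = sqrt (1 + 1 / (2 * (N - 1)))"
  define d where "d = 2 / (N - 1)"
  define Q where "Q = (2 * N) powr d"
  have d0: "d > 0" unfolding d_def using N2 by simp
  have Q0: "Q > 0" unfolding Q_def using N2 by simp
  have G0: "G > 0" unfolding G_def by (rule Gamma_real_pos) (use N2 in \<open>simp add: field_simps\<close>)
  have Gb: "G \<le> ((N + 1) / 2) powr ((N - 1) / 2)"
  proof -
    have "real (n - 1) = N - 1" unfolding N_def using assms by simp
    then have "G = Gamma (1 + real (n - 1) / 2)" unfolding G_def by simp
    also have "\<dots> \<le> (1 + real (n - 1) / 2) powr (real (n - 1) / 2)" by (rule gamma_half_bound)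
    also have "\<dots> = ((N + 1) / 2) powr ((N - 1) / 2)"
    proof -
      have h: "1 + (N - 1) / 2 = (N + 1) / 2" by (simp add: field_simps)
      show ?thesis unfolding \<open>real (n - 1) = N - 1\<close> h ..
    qed
    finally show ?thesis .
  qed
  have Gd: "G powr d \<le> (N + 1) / 2"
  proof -
    have "G powr d \<le> (((N + 1) / 2) powr ((N - 1) / 2)) powr d"
      by (rule powr_mono2) (use d0 G0 Gb in auto)
    also have "\<dots> = ((N + 1) / 2) powr ((N - 1) / 2 * d)" by (simp add: powr_powr)
    also have "(N - 1) / 2 * d = 1" unfolding d_def using N2 by simp
    also have "((N + 1) / 2) powr 1 = (N + 1) / 2" using N2 by simp
    finally show ?thesis .
  qed
  have Gd0: "G powr d > 0" using G0 by simp
  have C: "(2 * N / G) powr d \<ge> 2 * Q / (N + 1)"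
  proof -
    have "(2 * N / G) powr d = Q / G powr d" unfolding Q_def by (simp add: powr_divide)
    also have "\<dots> \<ge> Q / ((N + 1) / 2)" using Gd Gd0 Q0 N2 by (intro divide_left_mono) (auto intro!: mult_pos_pos)
    finally show ?thesis by (simp add: mult.commute)
  qed
  have sb: "s - 1 > 0" "(s - 1)\<^sup>2 \<le> 1 / (16 * (N - 1)\<^sup>2)" unfolding s_def using sqrt_bound[OF N2] by auto
  have B: "1 / (2 * (s - 1)\<^sup>2) \<ge> 8 * (N - 1)\<^sup>2"
  proof -
    have p: "(s - 1)\<^sup>2 > 0" using sb by simp
    have "8 * (N - 1)\<^sup>2 * (2 * (s - 1)\<^sup>2) \<le> 8 * (N - 1)\<^sup>2 * (2 * (1 / (16 * (N - 1)\<^sup>2)))"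
      using sb(2) by (intro mult_left_mono) auto
    also have "\<dots> = 1" using N2 by simp
    finally show ?thesis using p by (simp add: le_divide_eq)
  qed
  have key: "(N + 1)\<^sup>2 \<le> 2 * pi * N * (N - 1)"
  proof -
    have nn: "2 * N \<le> N * N" using mult_right_mono[OF N2, of N] N2 by simp
    have e1: "(N + 1)\<^sup>2 = N * N + 2 * N + 1" by (simp add: power2_eq_square algebra_simps)
    have e2: "6 * N * (N - 1) = 6 * (N * N) - 6 * N" by (simp add: algebra_simps)
    have "(N + 1)\<^sup>2 \<le> 6 * N * (N - 1)" unfolding e1 e2 using N2 nn by linarith
    also have "\<dots> \<le> 2 * pi * N * (N - 1)" using pi_gt3 N2 by (intro mult_right_mono) auto
    finally show ?thesis .
  qed
  have lhs: "Kc n / dl n = 8 * (N\<^sup>2 - 1) * (N - 1) * Q"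
    unfolding Kc_def dl_def Q_def d_def N_def using N2 N_def by (simp add: field_simps)
  have "8 * (N\<^sup>2 - 1) * (N - 1) * Q \<le> (pi * N * (N - 1) * (8 * (N - 1)\<^sup>2)) * (2 * Q / (N + 1))"
  proof -
    have "8 * (N\<^sup>2 - 1) * (N - 1) = 8 * (N - 1)\<^sup>2 * (N + 1)\<^sup>2 / (N + 1)"
      using N2 by (simp add: power2_eq_square field_simps)
    also have "\<dots> \<le> 8 * (N - 1)\<^sup>2 * (2 * pi * N * (N - 1)) / (N + 1)"
      using key N2 by (intro divide_right_mono mult_left_mono) auto
    finally have "8 * (N\<^sup>2 - 1) * (N - 1) \<le> 8 * (N - 1)\<^sup>2 * (2 * pi * N * (N - 1)) / (N + 1)" .
    then have "8 * (N\<^sup>2 - 1) * (N - 1) * Q \<le> (8 * (N - 1)\<^sup>2 * (2 * pi * N * (N - 1)) / (N + 1)) * Q"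
      using Q0 by (intro mult_right_mono) auto
    also have "\<dots> = (pi * N * (N - 1) * (8 * (N - 1)\<^sup>2)) * (2 * Q / (N + 1))" by simp
    finally show ?thesis .
  qed
  also have "\<dots> \<le> (pi * N * (N - 1) * (1 / (2 * (s - 1)\<^sup>2))) * (2 * N / G) powr d"
  proof (rule mult_mono)
    show "pi * N * (N - 1) * (8 * (N - 1)\<^sup>2) \<le> pi * N * (N - 1) * (1 / (2 * (s - 1)\<^sup>2))"
      using B N2 by (intro mult_left_mono) auto
    show "2 * Q / (N + 1) \<le> (2 * N / G) powr d" by (rule C)
    show "0 \<le> pi * N * (N - 1) * (1 / (2 * (s - 1)\<^sup>2))" using N2 by simp
    show "0 \<le> 2 * Q / (N + 1)" using Q0 N2 by simp
  qed
  also have "\<dots> = nu n" unfolding nu_def N_def s_def G_def d_def by simp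
  finally show ?thesis using lhs by simp
qed



lemma tele:
  fixes x d :: real
  assumes "x \<ge> 2" "d > 0"
  shows "d * x powr (-1 - d) \<le> (x - 1) powr (- d) - x powr (- d)"
proof -
  have x0: "x > 0" "x - 1 > 0" using assms by auto
  have l: "ln (x - 1) \<le> ln x - 1 / x"
  proof -
    have "x - 1 = x * (1 - 1 / x)" using x0 by (simp add: field_simps)
    then have "ln (x - 1) = ln x + ln (1 - 1 / x)" using x0 by (simp add: ln_mult)
    moreover have "ln (1 - 1 / x) \<le> (1 - 1 / x) - 1"
      by (rule ln_le_minus_one) (use assms in \<open>simp add: field_simps\<close>)
    ultimately show ?thesis by simp
  qed
  have "(x - 1) powr (- d) = exp (- d * ln (x - 1))" using x0 by (simp add: powr_def)
  also have "\<dots> \<ge> exp (- d * ln x + d / x)"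
  proof -
    have "- d * (ln x - 1 / x) \<le> - d * ln (x - 1)" using l assms(2) by (intro mult_left_mono_neg) auto
    then have "- d * ln x + d / x \<le> - d * ln (x - 1)" by (simp add: algebra_simps)
    then show ?thesis by simp
  qed
  finally have A: "exp (- d * ln x + d / x) \<le> (x - 1) powr (- d)" .
  have "exp (- d * ln x + d / x) = x powr (- d) * exp (d / x)"
    using x0 by (simp add: powr_def exp_add[symmetric])
  also have "\<dots> \<ge> x powr (- d) * (1 + d / x)"
    by (intro mult_left_mono) (auto simp: exp_ge_add_one_self add.commute)
  finally have B: "x powr (- d) * (1 + d / x) \<le> (x - 1) powr (- d)" using A by linarith
  have C: "x powr (-1 - d) = x powr (- d) / x"
  proof -
    have "x powr (-1 - d) = x powr (-1 + (- d))" by simp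
    also have "\<dots> = x powr (-1) * x powr (- d)" by (rule powr_add)
    also have "x powr (-1) = 1 / x" using x0 by (simp add: powr_minus_divide)
    finally show ?thesis by simp
  qed
  show ?thesis using B unfolding C by (simp add: algebra_simps)
qed



lemma r_facts:
  fixes M n :: nat
  assumes "n \<ge> 2" "M > 2 * n"
  defines "r \<equiv> (real M / (2 * real n)) powr (1 / (real n - 1))"
  shows "r \<ge> 1" "r ^ (n - 1) = real M / (2 * real n)"
    "r\<^sup>2 = (real M / (2 * real n)) powr dl n"
proof -
  define b where "b = real M / (2 * real n)"
  have b1: "b > 1" unfolding b_def using assms(1,2) by (simp add: field_simps)
  have e0: "1 / (real n - 1) \<ge> 0" using assms(1) by simp
  show "r \<ge> 1" unfolding r_def b_def[symmetric] using b1 e0 by (intro ge_one_powr_ge_zero) auto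
  then have r0: "r > 0" by simp
  have "r ^ (n - 1) = r powr real (n - 1)" using r0 by (simp add: powr_realpow)
  also have "real (n - 1) = real n - 1" using assms(1) by simp
  also have "r powr (real n - 1) = b powr (1 / (real n - 1) * (real n - 1))"
    unfolding r_def b_def[symmetric] by (simp add: powr_powr)
  also have "1 / (real n - 1) * (real n - 1) = 1" using assms(1) by simp
  also have "b powr 1 = b" using b1 by simp
  finally show "r ^ (n - 1) = real M / (2 * real n)" unfolding b_def .
  have "r\<^sup>2 = r powr real 2" using r0 by (simp add: powr_realpow)
  also have "\<dots> = b powr (1 / (real n - 1) * 2)"
    unfolding r_def b_def[symmetric] by (simp add: powr_powr)
  also have "1 / (real n - 1) * 2 = dl n" unfolding dl_def by simp
  finally show "r\<^sup>2 = (real M / (2 * real n)) powr dl n" unfolding b_def .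
qed

lemma floor_facts:
  fixes r :: real
  assumes "r \<ge> 1"
  shows "nat \<lfloor>r\<rfloor> \<ge> 1" "real (nat \<lfloor>r\<rfloor>) \<le> r" "real (nat \<lfloor>r\<rfloor>) \<ge> r / 2"
proof -
  have f1: "\<lfloor>r\<rfloor> \<ge> 1" using assms by simp
  have e: "real (nat \<lfloor>r\<rfloor>) = real_of_int \<lfloor>r\<rfloor>" using f1 by simp
  have "nat \<lfloor>r\<rfloor> \<ge> nat 1" by (rule nat_mono[OF f1])
  then show "nat \<lfloor>r\<rfloor> \<ge> 1" by simp
  show "real (nat \<lfloor>r\<rfloor>) \<le> r" unfolding e by simp
  have a: "real_of_int \<lfloor>r\<rfloor> > r - 1" by linarith
  have b: "real_of_int \<lfloor>r\<rfloor> \<ge> 1" using f1 by simp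
  show "real (nat \<lfloor>r\<rfloor>) \<ge> r / 2" unfolding e using a b by linarith
qed

lemma step_bound:
  fixes X :: "'x set" and Y :: "'y set" and P :: "'y set set"
  assumes fX: "finite X" and cX: "card X = n" and n2: "n \<ge> 2" and fY: "finite Y"
    and ch: "is_channel X Y W" and pp: "\<forall>x\<in>X. p x > 0" and ps: "(\<Sum>x\<in>X. p x) = 1"
    and op: "\<forall>y\<in>Y. out_prob p X W y > 0" and pt: "part Y P" and cP: "card P = M" and MM: "M > 2 * n"
  shows "\<exists>A\<in>P. \<exists>B\<in>P. A \<noteq> B \<and>
    mutual_info p X P (merged_channel W) - mutual_info p X (merge_blocks P A B) (merged_channel W)
      \<le> Kc n * real M powr (-1 - dl n)"
proof -
  have fP: "finite P" and ne: "\<forall>S\<in>P. S \<noteq> {} \<and> S \<subseteq> Y"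
    using pt unfolding part_def by auto
  define w where "w S = sum (jv p W S) X" for S
  have fS: "finite S" if "S \<in> P" for S using ne that fY by (meson finite_subset)
  have wpos: "w S > 0" if S: "S \<in> P" for S
    unfolding w_def
  proof (rule wt_pos)
    show "finite S" using fS S .
    show "S \<noteq> {}" using ne S by simp
    show "\<forall>y\<in>S. out_prob p X W y > 0" using ne S op by auto
  qed
  have wtot: "(\<Sum>S\<in>P. w S) = 1" unfolding w_def by (rule wt_total[OF pt ch ps fY])
  have jnn: "jv p W S x \<ge> 0" if "S \<in> P" "x \<in> X" for S x
    by (rule jv_nonneg[OF ch pp]) (use ne that in auto)
  define I' where "I' = {S\<in>P. w S \<le> 2 / real M}"
  define C where "C = {S\<in>P. \<not> w S \<le> 2 / real M}"
  have M0: "real M > 0" using MM by simp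
  have fC: "finite C" "finite I'" unfolding C_def I'_def using fP by auto
  have cC: "real (card C) < real M / 2"
  proof (rule ccontr)
    assume "\<not> real (card C) < real M / 2"
    then have cge: "real (card C) \<ge> real M / 2" by simp
    then have "card C > 0" using M0 by linarith
    then have Cne: "C \<noteq> {}" by auto
    have "(\<Sum>S\<in>C. 2 / real M) < (\<Sum>S\<in>C. w S)"
      by (rule sum_strict_mono[OF fC(1) Cne]) (simp add: C_def)
    moreover have "(\<Sum>S\<in>C. 2 / real M) = real (card C) * (2 / real M)" by simp
    moreover have "real (card C) * (2 / real M) \<ge> 1"
    proof -
      have "real (card C) * (2 / real M) \<ge> (real M / 2) * (2 / real M)"
        using cge M0 by (intro mult_right_mono) auto
      also have "(real M / 2) * (2 / real M) = 1" using M0 by simp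
      finally show ?thesis .
    qed
    moreover have "(\<Sum>S\<in>C. w S) \<le> (\<Sum>S\<in>P. w S)"
      by (rule sum_mono2[OF fP]) (use wpos in \<open>auto simp: C_def less_imp_le\<close>)
    ultimately show False using wtot by linarith
  qed
  have cu: "card I' + card C = M"
  proof -
    have "I' \<union> C = P" "I' \<inter> C = {}" unfolding I'_def C_def by auto
    then show ?thesis using card_Un_disjoint[OF fC(2) fC(1)] cP by simp
  qed
  have cI: "real (card I') > real M / 2" using cu cC by linarith
  define r where "r = (real M / (2 * real n)) powr (1 / (real n - 1))"
  note rf = r_facts[OF n2 MM, folded r_def]
  define m where "m = nat \<lfloor>r\<rfloor>"
  note mf = floor_facts[OF rf(1), folded m_def]
  have mpow: "real n * real m ^ (n - 1) \<le> real M / 2"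
  proof -
    have "real m ^ (n - 1) \<le> r ^ (n - 1)" using mf by (intro power_mono) auto
    then have "real n * real m ^ (n - 1) \<le> real n * (real M / (2 * real n))"
      unfolding rf(2) by (intro mult_left_mono) auto
    also have "\<dots> = real M / 2" using n2 by simp
    finally show ?thesis .
  qed
  have bigI: "card I' > n * m ^ (n - 1)"
  proof -
    have "real (n * m ^ (n - 1)) < real (card I')" using mpow cI by simp
    then show ?thesis by linarith
  qed
  define u where "u S x = sqrt (jv p W S x / w S)" for S x
  have unn: "\<forall>i\<in>I'. \<forall>x\<in>X. u i x \<ge> 0"
  proof (intro ballI)
    fix S x assume S: "S \<in> I'" and x: "x \<in> X"
    then have S': "S \<in> P" unfolding I'_def by simp
    show "u S x \<ge> 0" unfolding u_def
      by (rule real_sqrt_ge_zero) (rule divide_nonneg_pos[OF jnn[OF S' x] wpos[OF S']])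
  qed
  have usq: "\<forall>i\<in>I'. (\<Sum>x\<in>X. (u i x)\<^sup>2) = 1"
  proof
    fix S assume "S \<in> I'"
    then have S: "S \<in> P" unfolding I'_def by simp
    have "(\<Sum>x\<in>X. (u S x)\<^sup>2) = (\<Sum>x\<in>X. jv p W S x / w S)"
      unfolding u_def by (rule sum.cong) (use jnn[OF S] wpos[OF S] in auto)
    also have "\<dots> = w S / w S" unfolding sum_divide_distrib[symmetric] w_def ..
    also have "\<dots> = 1" using wpos[OF S] by simp
    finally show "(\<Sum>x\<in>X. (u S x)\<^sup>2) = 1" .
  qed
  obtain A B where AB: "A \<in> I'" "B \<in> I'" "A \<noteq> B"
    and dAB: "(\<Sum>x\<in>X. (u A x - u B x)\<^sup>2) \<le> real (n+1) * real (n-1) / (real m)\<^sup>2"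
    using pack[OF fX cX n2 fC(2) mf(1) unn usq bigI] by blast
  have AP: "A \<in> P" "B \<in> P" using AB unfolding I'_def by auto
  have wA: "w A \<le> 2 / real M" "w B \<le> 2 / real M" using AB unfolding I'_def by auto
  let ?dI = "mutual_info p X P (merged_channel W) - mutual_info p X (merge_blocks P A B) (merged_channel W)"
  have "?dI = Gf p X (jv p W A) + Gf p X (jv p W B) - Gf p X (\<lambda>x. jv p W A x + jv p W B x)"
    by (rule merge_diff[OF pt fY AP(1,2) AB(3) pp])
  also have "\<dots> \<le> 2 * max (w A) (w B) * (\<Sum>x\<in>X. (u A x - u B x)\<^sup>2)"
    unfolding u_def w_def
    by (rule merge_cost_bound[OF fX pp]) (use jnn AP wpos in \<open>auto simp: w_def\<close>)
  also have "\<dots> \<le> 2 * (2 / real M) * (real (n+1) * real (n-1) / (real m)\<^sup>2)"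
  proof (rule mult_mono)
    show "2 * max (w A) (w B) \<le> 2 * (2 / real M)" using wA by simp
    show "(\<Sum>x\<in>X. (u A x - u B x)\<^sup>2) \<le> real (n+1) * real (n-1) / (real m)\<^sup>2" by (rule dAB)
    show "0 \<le> 2 * (2 / real M)" using M0 by simp
    show "0 \<le> (\<Sum>x\<in>X. (u A x - u B x)\<^sup>2)" by (simp add: sum_nonneg)
  qed
  also have "\<dots> \<le> Kc n * real M powr (-1 - dl n)"
  proof -
    define N where "N = real n"
    define R where "R = real M"
    have N2: "N \<ge> 2" unfolding N_def using n2 by simp
    have R0: "R > 0" unfolding R_def using M0 .
    have nn: "real (n+1) * real (n-1) = N\<^sup>2 - 1"
      unfolding N_def using n2 by (simp add: of_nat_diff power2_eq_square algebra_simps)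
    have m0: "real m > 0" using mf by simp
    have r0: "r > 0" using rf by simp
    have Rd: "R powr dl n > 0" using R0 by simp
    have m2: "1 / (real m)\<^sup>2 \<le> 4 * (2 * N) powr dl n / R powr dl n"
    proof -
      have "(r / 2)\<^sup>2 \<le> (real m)\<^sup>2" using mf r0 by (intro power_mono) auto
      then have "r\<^sup>2 / 4 \<le> (real m)\<^sup>2" by (simp add: power_divide)
      then have "1 / (real m)\<^sup>2 \<le> 1 / (r\<^sup>2 / 4)" using r0 m0 by (intro divide_left_mono) auto
      also have "1 / (r\<^sup>2 / 4) = 4 / r\<^sup>2" by simp
      also have "r\<^sup>2 = R powr dl n / (2 * N) powr dl n"
        unfolding rf(3) R_def N_def by (simp add: powr_divide)
      also have "4 / (R powr dl n / (2 * N) powr dl n) = 4 * (2 * N) powr dl n / R powr dl n" by simp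
      finally show ?thesis .
    qed
    have rp: "R powr (-1 - dl n) = 1 / (R * R powr dl n)"
    proof -
      have "R powr (-1 - dl n) = R powr (-1 + (- dl n))" by simp
      also have "\<dots> = R powr (-1) * R powr (- dl n)" by (rule powr_add)
      also have "\<dots> = (1 / R) * (1 / R powr dl n)" using R0 by (simp add: powr_minus_divide)
      finally show ?thesis by simp
    qed
    have "2 * (2 / R) * ((N\<^sup>2 - 1) / (real m)\<^sup>2) = (4 * (N\<^sup>2 - 1) / R) * (1 / (real m)\<^sup>2)" by simp
    also have "\<dots> \<le> (4 * (N\<^sup>2 - 1) / R) * (4 * (2 * N) powr dl n / R powr dl n)"
    proof (rule mult_left_mono[OF m2])
      have "N\<^sup>2 \<ge> 1" using N2 by (simp add: one_le_power)
      then show "0 \<le> 4 * (N\<^sup>2 - 1) / R" using R0 by simp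
    qed
    also have "\<dots> = Kc n * R powr (-1 - dl n)"
      unfolding rp Kc_def N_def by (simp add: field_simps)
    finally have F: "2 * (2 / real M) * (((real n)\<^sup>2 - 1) / (real m)\<^sup>2) \<le> Kc n * real M powr (-1 - dl n)"
      unfolding N_def R_def .
    show ?thesis unfolding nn[unfolded N_def] by (rule F)
  qed
  finally show ?thesis using AP AB(3) by blast
qed



lemma I_init:
  assumes "\<forall>x\<in>X. p x > 0"
  shows "mutual_info p X ((\<lambda>y. {y}) ` Y) (merged_channel W) = mutual_info p X Y W"
proof -
  have inj: "inj_on (\<lambda>y. {y}) Y" by (auto simp: inj_on_def)
  have "mutual_info p X ((\<lambda>y. {y}) ` Y) (merged_channel W)
      = (\<Sum>S\<in>(\<lambda>y. {y}) ` Y. Gf p X (\<lambda>x. p x * merged_channel W x S))" by (rule mi_G[OF assms])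
  also have "\<dots> = (\<Sum>y\<in>Y. Gf p X (\<lambda>x. p x * merged_channel W x {y}))"
    by (simp add: sum.reindex[OF inj])
  also have "\<dots> = (\<Sum>y\<in>Y. Gf p X (\<lambda>x. p x * W x y))" by (simp add: merged_channel_def)
  also have "\<dots> = mutual_info p X Y W" by (rule mi_G[OF assms, symmetric])
  finally show ?thesis .
qed

lemma Kc_nonneg: "n \<ge> 2 \<Longrightarrow> Kc n \<ge> 0"
proof -
  assume n: "n \<ge> 2"
  have "(real n)\<^sup>2 \<ge> 1" using n by (simp add: one_le_power)
  then show "Kc n \<ge> 0" unfolding Kc_def by simp
qed

lemma dl_pos: "n \<ge> 2 \<Longrightarrow> dl n > 0"
  unfolding dl_def by simp

lemma greedy_inv:
  fixes X :: "'x set" and Y :: "'y set"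
  assumes fX: "finite X" and cX: "card X = n" and n2: "n \<ge> 2" and fY: "finite Y"
    and ch: "is_channel X Y W" and pp: "\<forall>x\<in>X. p x > 0" and ps: "(\<Sum>x\<in>X. p x) = 1"
    and op: "\<forall>y\<in>Y. out_prob p X W y > 0" and L: "L \<ge> 2 * n"
    and gr: "greedy_reach p X Y W L P"
  shows "part Y P \<and> mutual_info p X Y W - mutual_info p X P (merged_channel W)
           \<le> (Kc n / dl n) * (real (card P) powr (- dl n) - real (card Y) powr (- dl n))
         \<and> (P = (\<lambda>y. {y}) ` Y \<or> card P \<ge> L)"
  using gr
proof (induction rule: greedy_reach.induct)
  case init
  have inj: "inj_on (\<lambda>y. {y}) Y" by (auto simp: inj_on_def)
  have c: "card ((\<lambda>y. {y}) ` Y) = card Y" by (rule card_image[OF inj])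
  have "mutual_info p X Y W - mutual_info p X ((\<lambda>y. {y}) ` Y) (merged_channel W) = 0"
    using I_init[OF pp, of Y W] by simp
  then show ?case using part_init[OF fY] c by simp
next
  case (step P P')
  have pt: "part Y P" and IH: "mutual_info p X Y W - mutual_info p X P (merged_channel W)
           \<le> (Kc n / dl n) * (real (card P) powr (- dl n) - real (card Y) powr (- dl n))"
    using step.IH by auto
  note gs = step.hyps(3)[unfolded greedy_step_def]
  obtain A where A1: "A \<in> P" and ex: "\<exists>B\<in>P. A \<noteq> B \<and> P' = merge_blocks P A B \<and> (\<forall>A'\<in>P. \<forall>B'\<in>P. A' \<noteq> B' \<longrightarrow>
           mutual_info p X P (merged_channel W) - mutual_info p X P' (merged_channel W)
           \<le> mutual_info p X P (merged_channel W)
              - mutual_info p X (merge_blocks P A' B') (merged_channel W))"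
    using gs ..
  obtain B where AB0': "B \<in> P" and R: "A \<noteq> B \<and> P' = merge_blocks P A B \<and> (\<forall>A'\<in>P. \<forall>B'\<in>P. A' \<noteq> B' \<longrightarrow>
           mutual_info p X P (merged_channel W) - mutual_info p X P' (merged_channel W)
           \<le> mutual_info p X P (merged_channel W)
              - mutual_info p X (merge_blocks P A' B') (merged_channel W))" using ex ..
  have AB: "A \<in> P" "B \<in> P" "A \<noteq> B" "P' = merge_blocks P A B" using A1 AB0' R by simp_all
  have mn: "\<forall>A'\<in>P. \<forall>B'\<in>P. A' \<noteq> B' \<longrightarrow>
           mutual_info p X P (merged_channel W) - mutual_info p X P' (merged_channel W)
           \<le> mutual_info p X P (merged_channel W)
              - mutual_info p X (merge_blocks P A' B') (merged_channel W)" using R by (rule conjunct2[OF conjunct2])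
  define M where "M = card P"
  have MM: "M > 2 * n" using step.hyps(2) L unfolding M_def by simp
  have sb: "\<exists>A0\<in>P. \<exists>B0\<in>P. A0 \<noteq> B0 \<and>
    mutual_info p X P (merged_channel W) - mutual_info p X (merge_blocks P A0 B0) (merged_channel W)
      \<le> Kc n * real M powr (-1 - dl n)"
    by (rule step_bound[OF fX cX n2 fY ch pp ps op pt M_def[symmetric] MM])
  obtain A0 where A0: "A0 \<in> P" and ex2: "\<exists>B0\<in>P. A0 \<noteq> B0 \<and>
    mutual_info p X P (merged_channel W) - mutual_info p X (merge_blocks P A0 B0) (merged_channel W)
      \<le> Kc n * real M powr (-1 - dl n)" using sb ..
  obtain B0 where B0: "B0 \<in> P" and R0: "A0 \<noteq> B0 \<and>
    mutual_info p X P (merged_channel W) - mutual_info p X (merge_blocks P A0 B0) (merged_channel W)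
      \<le> Kc n * real M powr (-1 - dl n)" using ex2 ..
  have AB0: "A0 \<in> P" "B0 \<in> P" "A0 \<noteq> B0" using A0 B0 R0 by auto
  have c0: "mutual_info p X P (merged_channel W) - mutual_info p X (merge_blocks P A0 B0) (merged_channel W)
      \<le> Kc n * real M powr (-1 - dl n)" using R0 by (rule conjunct2)
  have cost: "mutual_info p X P (merged_channel W) - mutual_info p X P' (merged_channel W)
      \<le> Kc n * real M powr (-1 - dl n)"
    using mn[rule_format, OF AB0] c0 by linarith
  have d0: "dl n > 0" using dl_pos[OF n2] .
  have K0: "Kc n \<ge> 0" using Kc_nonneg[OF n2] .
  have M2: "real M \<ge> 2" using MM n2 by simp
  have tl: "dl n * real M powr (-1 - dl n) \<le> (real M - 1) powr (- dl n) - real M powr (- dl n)"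
    by (rule tele[OF M2 d0])
  have "Kc n * real M powr (-1 - dl n) = (Kc n / dl n) * (dl n * real M powr (-1 - dl n))"
    using d0 by simp
  also have "\<dots> \<le> (Kc n / dl n) * ((real M - 1) powr (- dl n) - real M powr (- dl n))"
    using tl K0 d0 by (intro mult_left_mono) auto
  finally have cost2: "mutual_info p X P (merged_channel W) - mutual_info p X P' (merged_channel W)
      \<le> (Kc n / dl n) * ((real M - 1) powr (- dl n) - real M powr (- dl n))" using cost by linarith
  have pm: "part Y P'" "card P' = card P - 1" using part_merge[OF pt AB(1,2,3)] AB(4) by auto
  have cP': "real (card P') = real M - 1" using pm(2) MM unfolding M_def by simp
  have "mutual_info p X Y W - mutual_info p X P' (merged_channel W)
      = (mutual_info p X Y W - mutual_info p X P (merged_channel W))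
        + (mutual_info p X P (merged_channel W) - mutual_info p X P' (merged_channel W))" by simp
  also have "\<dots> \<le> (Kc n / dl n) * (real M powr (- dl n) - real (card Y) powr (- dl n))
        + (Kc n / dl n) * ((real M - 1) powr (- dl n) - real M powr (- dl n))"
    using IH cost2 unfolding M_def by linarith
  also have "\<dots> = (Kc n / dl n) * (real (card P') powr (- dl n) - real (card Y) powr (- dl n))"
    unfolding cP' by (simp add: algebra_simps)
  finally have F: "mutual_info p X Y W - mutual_info p X P' (merged_channel W)
     \<le> (Kc n / dl n) * (real (card P') powr (- dl n) - real (card Y) powr (- dl n))" .
  have "card P' \<ge> L" using step.hyps(2) pm(2) by simp
  then show ?case using pm(1) F by blast
qed



lemma relabel:
  fixes P :: "'y set set" and W :: "'x \<Rightarrow> 'y \<Rightarrow> real"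
  assumes pt: "part Y P" and fY: "finite Y" and ch: "is_channel X Y W" and pp: "\<forall>x\<in>X. p x > 0"
  shows "\<exists>(Z :: nat set) Q. finite Z \<and> card Z = card P \<and> is_channel X Z Q \<and> degraded X Y Z Q W
           \<and> mutual_info p X Z Q = mutual_info p X P (merged_channel W)"
proof -
  have fP: "finite P" and ne: "\<forall>S\<in>P. S \<noteq> {} \<and> S \<subseteq> Y" and un: "\<Union>P = Y"
    and dj: "\<forall>A\<in>P. \<forall>B\<in>P. A \<noteq> B \<longrightarrow> A \<inter> B = {}"
    using pt unfolding part_def by auto
  have fS: "\<forall>S\<in>P. finite S" using ne fY by (meson finite_subset)
  obtain h where h: "bij_betw h P {0..<card P}" using ex_bij_betw_finite_nat[OF fP] by blast
  define g where "g = inv_into P h"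
  have g: "bij_betw g {0..<card P} P" unfolding g_def by (rule bij_betw_inv_into[OF h])
  have gP: "g z \<in> P" if "z \<in> {0..<card P}" for z using g that by (auto simp: bij_betw_def)
  define Z where "Z = {0..<card P}"
  define Q where "Q x z = merged_channel W x (g z)" for x z
  have fZ: "finite Z" and cZ: "card Z = card P" unfolding Z_def by auto
  have sumZ: "(\<Sum>z\<in>Z. F (g z)) = (\<Sum>S\<in>P. F S)" for F :: "'y set \<Rightarrow> real"
    unfolding Z_def by (rule sum.reindex_bij_betw[OF g])
  have mi: "mutual_info p X Z Q = mutual_info p X P (merged_channel W)"
  proof -
    have "mutual_info p X Z Q = (\<Sum>z\<in>Z. Gf p X (\<lambda>x. p x * Q x z))" by (rule mi_G[OF pp])
    also have "\<dots> = (\<Sum>S\<in>P. Gf p X (\<lambda>x. p x * merged_channel W x S))"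
      unfolding Q_def by (rule sumZ)
    also have "\<dots> = mutual_info p X P (merged_channel W)" by (rule mi_G[OF pp, symmetric])
    finally show ?thesis .
  qed
  have chQ: "is_channel X Z Q"
    unfolding is_channel_def
  proof (rule ballI, rule conjI)
    fix x assume x: "x \<in> X"
    show "\<forall>z\<in>Z. Q x z \<ge> 0"
    proof
      fix z assume "z \<in> Z"
      then have "g z \<subseteq> Y" using gP ne unfolding Z_def by auto
      then show "Q x z \<ge> 0" unfolding Q_def merged_channel_def using ch x
        unfolding is_channel_def by (intro sum_nonneg) auto
    qed
    have "(\<Sum>z\<in>Z. Q x z) = (\<Sum>S\<in>P. merged_channel W x S)" unfolding Q_def by (rule sumZ)
    also have "\<dots> = (\<Sum>y\<in>\<Union>P. W x y)"
      unfolding merged_channel_def using sum.Union_disjoint[OF fS dj, of "W x"] by (simp add: o_def)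
    also have "\<dots> = 1" using un ch x unfolding is_channel_def by simp
    finally show "(\<Sum>z\<in>Z. Q x z) = 1" .
  qed
  define \<Phi> where "\<Phi> y z = (if y \<in> g z then 1 else 0 :: real)" for y z
  have chPhi: "is_channel Y Z \<Phi>"
    unfolding is_channel_def
  proof (rule ballI, rule conjI)
    fix y assume y: "y \<in> Y"
    show "\<forall>z\<in>Z. \<Phi> y z \<ge> 0" unfolding \<Phi>_def by simp
    obtain S0 where S0: "S0 \<in> P" "y \<in> S0" using y un by auto
    have iff: "(y \<in> S) = (S = S0)" if "S \<in> P" for S
      using dj S0 that by auto
    have "(\<Sum>z\<in>Z. \<Phi> y z) = (\<Sum>S\<in>P. (if y \<in> S then 1 else 0 :: real))" unfolding \<Phi>_def by (rule sumZ)
    also have "\<dots> = (\<Sum>S\<in>P. (if S = S0 then 1 else 0 :: real))"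
      by (rule sum.cong) (use iff in auto)
    also have "\<dots> = 1" using fP S0 by simp
    finally show "(\<Sum>z\<in>Z. \<Phi> y z) = 1" .
  qed
  have deg: "degraded X Y Z Q W"
    unfolding degraded_def
  proof (intro exI conjI ballI)
    show "is_channel Y Z \<Phi>" by (rule chPhi)
    fix x z assume x: "x \<in> X" and z: "z \<in> Z"
    have sub: "g z \<subseteq> Y" using z gP ne unfolding Z_def by auto
    have "(\<Sum>y\<in>Y. W x y * \<Phi> y z) = (\<Sum>y\<in>Y. if y \<in> g z then W x y else 0)"
      unfolding \<Phi>_def by (rule sum.cong) auto
    also have "\<dots> = (\<Sum>y\<in>Y \<inter> g z. W x y)" by (rule sum.inter_restrict[OF fY, symmetric])
    also have "Y \<inter> g z = g z" using sub by auto
    finally show "Q x z = (\<Sum>y\<in>Y. W x y * \<Phi> y z)" unfolding Q_def merged_channel_def by simp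
  qed
  show ?thesis using fZ cZ chQ deg mi by blast
qed

lemma greedy_exists:
  fixes X :: "'x set" and Y :: "'y set"
  assumes fX: "finite X" and cX: "card X = n" and n2: "n \<ge> 2" and fY: "finite Y"
    and ch: "is_channel X Y W" and pp: "\<forall>x\<in>X. p x > 0" and ps: "(\<Sum>x\<in>X. p x) = 1"
    and op: "\<forall>y\<in>Y. out_prob p X W y > 0" and L: "L \<ge> 2 * n"
  shows "\<exists>P. greedy_merge_output p X Y W L P"
proof -
  have main: "\<forall>P. card P = k \<longrightarrow> greedy_reach p X Y W L P \<longrightarrow> (\<exists>P'. greedy_merge_output p X Y W L P')" for k
  proof (induction k rule: less_induct)
    case (less k)
    show ?case
    proof (intro allI impI)
      fix P assume cP: "card P = k" and gr: "greedy_reach p X Y W L P"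
      show "\<exists>P'. greedy_merge_output p X Y W L P'"
      proof (cases "card P \<le> L")
        case True
        then show ?thesis using gr unfolding greedy_merge_output_def by blast
      next
        case False
        have pt: "part Y P" using greedy_inv[OF fX cX n2 fY ch pp ps op L gr] by (rule conjunct1)
        have fP: "finite P" using pt unfolding part_def by (rule conjunct1)
        have c2: "card P \<ge> 2" using False L n2 by simp
        then have "P \<noteq> {}" by auto
        then obtain A where A: "A \<in> P" by blast
        have "card (P - {A}) \<ge> 1" using c2 A fP by simp
        have "P - {A} \<noteq> {}"
        proof
          assume "P - {A} = {}"
          with \<open>card (P - {A}) \<ge> 1\<close> show False by simp
        qed
        then obtain B where B: "B \<in> P" "B \<noteq> A" by blast
        define Pr where "Pr = {q \<in> P \<times> P. fst q \<noteq> snd q}"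
        have fPr: "finite Pr" unfolding Pr_def using fP by simp
        have nPr: "Pr \<noteq> {}" unfolding Pr_def using A B by auto
        define f where "f q = mutual_info p X (merge_blocks P (fst q) (snd q)) (merged_channel W)" for q
        obtain q where q: "q \<in> Pr" and qm: "\<forall>q'\<in>Pr. f q' \<le> f q"
          using argmax_ex[OF fPr nPr, of f] ..
        define P' where "P' = merge_blocks P (fst q) (snd q)"
        have qP: "fst q \<in> P" "snd q \<in> P" "fst q \<noteq> snd q" using q unfolding Pr_def by auto
        have gs: "greedy_step p X W P P'"
          unfolding greedy_step_def
        proof (rule bexI[OF _ qP(1)], rule bexI[OF _ qP(2)], intro conjI ballI impI)
          show "fst q \<noteq> snd q" using qP(3) .
          show "P' = merge_blocks P (fst q) (snd q)" unfolding P'_def ..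
          fix A' B' assume A': "A' \<in> P" and B': "B' \<in> P" and ne': "A' \<noteq> B'"
          have "(A', B') \<in> Pr" unfolding Pr_def using A' B' ne' by simp
          then have "f (A', B') \<le> f q" by (rule bspec[OF qm])
          then show "mutual_info p X P (merged_channel W) - mutual_info p X P' (merged_channel W)
           \<le> mutual_info p X P (merged_channel W) - mutual_info p X (merge_blocks P A' B') (merged_channel W)"
            unfolding f_def P'_def by simp
        qed
        have gr': "greedy_reach p X Y W L P'"
          by (rule greedy_reach.step[OF gr _ gs]) (use False in simp)
        have "card P' = card P - 1" unfolding P'_def using part_merge(2)[OF pt qP] .
        then have "card P' < k" using cP c2 by simp
        then show ?thesis using less.IH gr' by blast
      qed
    qed
  qed
  show ?thesis using main[of "card ((\<lambda>y. {y}) ` Y)", rule_format, OF refl greedy_reach.init] .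
qed



theorem theorem1:
  fixes X :: "'x set" and Y :: "'y set" and W :: "'x \<Rightarrow> 'y \<Rightarrow> real"
    and p :: "'x \<Rightarrow> real" and L :: nat
  assumes "finite X" and "finite Y" and "card X \<ge> 2"
    and "is_channel X Y W"
    and "\<forall>x\<in>X. p x > 0" and "(\<Sum>x\<in>X. p x) = 1"
    and "\<forall>y\<in>Y. out_prob p X W y > 0"
    and "card Y > 2 * card X"
    and "L \<ge> 2 * card X"
  shows "(\<exists>(Z :: nat set) Q. finite Z \<and> card Z \<le> L \<and> is_channel X Z Q \<and> degraded X Y Z Q W \<and>
            mutual_info p X Y W - mutual_info p X Z Q
              \<le> nu (card X) * real L powr (- 2 / (real (card X) - 1)))
       \<and> (\<forall>P. greedy_merge_output p X Y W L P \<longrightarrow>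
            mutual_info p X Y W - mutual_info p X P (merged_channel W)
              \<le> nu (card X) * real L powr (- 2 / (real (card X) - 1)))"
proof -
  define n where "n = card X"
  have fX: "finite X" and cX: "card X = n" and n2: "n \<ge> 2" and fY: "finite Y"
    and ch: "is_channel X Y W" and pp: "\<forall>x\<in>X. p x > 0" and ps: "(\<Sum>x\<in>X. p x) = 1"
    and op: "\<forall>y\<in>Y. out_prob p X W y > 0" and L: "L \<ge> 2 * n"
    using assms unfolding n_def by auto
  have e: "- 2 / (real (card X) - 1) = - dl n" unfolding dl_def n_def by simp
  have d0: "dl n > 0" using dl_pos[OF n2] .
  have K0: "Kc n \<ge> 0" using Kc_nonneg[OF n2] .
  have nub: "Kc n / dl n \<le> nu n" using nu_bound[OF n2] .
  have nu0: "nu n \<ge> 0" by (rule order_trans[OF divide_nonneg_pos[OF K0 d0] nub])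
  have Lpos: "real L > 0" using L n2 by simp
  have part2: "mutual_info p X Y W - mutual_info p X P (merged_channel W) \<le> nu n * real L powr (- dl n)"
    if go: "greedy_merge_output p X Y W L P" for P
  proof -
    have gr: "greedy_reach p X Y W L P" and cl: "card P \<le> L"
      using go unfolding greedy_merge_output_def by auto
    note inv = greedy_inv[OF fX cX n2 fY ch pp ps op L gr]
    have bnd: "mutual_info p X Y W - mutual_info p X P (merged_channel W)
           \<le> (Kc n / dl n) * (real (card P) powr (- dl n) - real (card Y) powr (- dl n))"
      using inv by (elim conjE)
    have alt: "P = (\<lambda>y. {y}) ` Y \<or> card P \<ge> L" using inv by (elim conjE)
    show ?thesis
    proof (cases "P = (\<lambda>y. {y}) ` Y")
      case True
      have "mutual_info p X Y W - mutual_info p X P (merged_channel W) = 0"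
        unfolding True using I_init[OF pp, of Y W] by simp
      also have "0 \<le> nu n * real L powr (- dl n)" using nu0 by simp
      finally show ?thesis .
    next
      case False
      then have "card P = L" using alt cl by simp
      then have "mutual_info p X Y W - mutual_info p X P (merged_channel W)
           \<le> (Kc n / dl n) * (real L powr (- dl n) - real (card Y) powr (- dl n))" using bnd by simp
      also have "\<dots> \<le> (Kc n / dl n) * (real L powr (- dl n))"
        using K0 d0 by (intro mult_left_mono) auto
      also have "\<dots> \<le> nu n * real L powr (- dl n)"
        using nub by (intro mult_right_mono) auto
      finally show ?thesis .
    qed
  qed
  obtain P where go: "greedy_merge_output p X Y W L P"
    using greedy_exists[OF fX cX n2 fY ch pp ps op L] ..
  have gr0: "greedy_reach p X Y W L P" using go unfolding greedy_merge_output_def by (rule conjunct1)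
  have pt: "part Y P"
    using greedy_inv[OF fX cX n2 fY ch pp ps op L gr0] by (rule conjunct1)
  have cl: "card P \<le> L" using go unfolding greedy_merge_output_def by simp
  obtain Z :: "nat set" and Q where ZQ0: "finite Z \<and> card Z = card P \<and> is_channel X Z Q \<and> degraded X Y Z Q W
    \<and> mutual_info p X Z Q = mutual_info p X P (merged_channel W)"
    using relabel[OF pt fY ch pp] by (elim exE) (rule that)
  have ZQ: "finite Z" "card Z = card P" "is_channel X Z Q" "degraded X Y Z Q W"
    "mutual_info p X Z Q = mutual_info p X P (merged_channel W)" using ZQ0 by simp_all
  have part1: "\<exists>(Z :: nat set) Q. finite Z \<and> card Z \<le> L \<and> is_channel X Z Q \<and> degraded X Y Z Q W \<and>
            mutual_info p X Y W - mutual_info p X Z Q \<le> nu n * real L powr (- dl n)"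
    using ZQ cl part2[OF go] by (intro exI[of _ Z] exI[of _ Q]) simp
  have e': "- 2 / (real n - 1) = - dl n" unfolding dl_def by simp
  show ?thesis unfolding n_def[symmetric] e'
    by (intro conjI allI impI part1 part2)
qed


end
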